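(* For all positive integers $n$ and $m$, the Pancake graphs satisfy $\chi(P_{n+m})\leqslant\chi(P_n)+\chi(P_m)$.
   Context: For $n\geqslant 1$, the Pancake graph $P_n$ is the Cayley graph on the symmetric group $\mathrm{Sym}_n$, with permutations written in one-line notation $\pi=[\pi_1\pi_2\ldots\pi_n]$. Its generating set consists of the prefix-reversals $r_i$, $2\leqslant i\leqslant n$. Multiplying $\pi$ on the right by $r_i$ reverses the first $i$ entries: $\pi r_i=[\pi_i\pi_{i-1}\ldots\pi_1\pi_{i+1}\ldots\pi_n]$. Two vertices $\pi,\sigma$ are adjacent iff $\sigma=\pi r_i$ for some $2\leqslant i\leqslant n$. In particular $P_1$ is a single vertex. $\chi$ denotes the chromatic number. *)

theory Defs
  imports Main
begin

text \<open>Vertices of the Pancake graph P_n: permutations of {1..n} in one-line notation,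
  represented as lists.\<close>
definition pancake_vertices :: "nat \<Rightarrow> nat list set" where
  "pancake_vertices n = {p. distinct p \<and> set p = {1..n}}"

text \<open>Right multiplication by the prefix reversal r_i: reverse the first i entries.\<close>
definition prefix_rev :: "nat \<Rightarrow> nat list \<Rightarrow> nat list" where
  "prefix_rev i p = rev (take i p) @ drop i p"

definition pancake_adj :: "nat \<Rightarrow> nat list \<Rightarrow> nat list \<Rightarrow> bool" where
  "pancake_adj n p q \<longleftrightarrow> p \<in> pancake_vertices n \<and> q \<in> pancake_vertices n \<and>
     (\<exists>i. 2 \<le> i \<and> i \<le> n \<and> q = prefix_rev i p)"

definition pancake_colorable :: "nat \<Rightarrow> nat \<Rightarrow> bool" where
  "pancake_colorable n k \<longleftrightarrow>
     (\<exists>c :: nat list \<Rightarrow> nat. (\<forall>p \<in> pancake_vertices n. c p < k) \<and>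
        (\<forall>p q. pancake_adj n p q \<longrightarrow> c p \<noteq> c q))"

definition pancake_chi :: "nat \<Rightarrow> nat" where
  "pancake_chi n = (LEAST k. pancake_colorable n k)"

end

theory Submission
  imports Defs
begin

lemma filter_prefix_rev:
  "filter P (prefix_rev i xs) = prefix_rev (length (filter P (take i xs))) (filter P xs)"
proof -
  have "filter P xs = filter P (take i xs) @ filter P (drop i xs)"
    by (metis append_take_drop_id filter_append)
  then show ?thesis unfolding prefix_rev_def by (simp add: rev_filter)
qed

lemma map_prefix_rev: "map f (prefix_rev j xs) = prefix_rev j (map f xs)"
  unfolding prefix_rev_def by (simp add: rev_map take_map drop_map)

lemma len2:
  assumes "2 \<le> i" "i \<le> length xs" "P (xs!0)" "P (xs!(i-1))"
  shows "2 \<le> length (filter P (take i xs))"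
proof -
  have "{0, i-1} \<subseteq> {k. k < length (take i xs) \<and> P (take i xs ! k)}"
    using assms by auto
  hence "card {0::nat, i-1} \<le> card {k. k < length (take i xs) \<and> P (take i xs ! k)}"
    by (intro card_mono) auto
  moreover have "card {0::nat, i-1} = 2" using assms by auto
  ultimately show ?thesis by (simp add: length_filter_conv_card)
qed

lemma len_filter_take_le: "length (filter P (take i xs)) \<le> length (filter P xs)"
  by (metis append_take_drop_id filter_append length_append le_add1)

lemma vert_len: "p \<in> pancake_vertices n \<Longrightarrow> length p = n"
proof -
  assume "p \<in> pancake_vertices n"
  hence "distinct p" "set p = {1..n}" unfolding pancake_vertices_def by auto
  hence "length p = card {1..n}" using distinct_card by metis
  thus "length p = n" by simp
qed

lemma hd_prefix_rev:
  assumes "1 \<le> i" "i \<le> length p"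
  shows "hd (prefix_rev i p) = p!(i-1)"
proof -
  have "take i p \<noteq> []" using assms by auto
  then show ?thesis using assms unfolding prefix_rev_def
    by (simp add: hd_append hd_rev last_conv_nth)
qed

lemma colorable_exists: "pancake_colorable n (n+1)"
  unfolding pancake_colorable_def
proof (intro exI[of _ "\<lambda>p. if p = [] then 0 else hd p"] conjI ballI allI impI)
  fix p assume p: "p \<in> pancake_vertices n"
  show "(if p = [] then 0 else hd p) < n + 1"
  proof (cases "p = []")
    case False
    hence "hd p \<in> set p" by (rule hd_in_set)
    hence "hd p \<le> n" using p unfolding pancake_vertices_def by auto
    thus ?thesis using False by simp
  qed simp
next
  fix p q assume a: "pancake_adj n p q"
  then obtain i where i: "2 \<le> i" "i \<le> n" "q = prefix_rev i p" "p \<in> pancake_vertices n"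
    unfolding pancake_adj_def by auto
  have lp: "length p = n" using vert_len i(4) .
  have d: "distinct p" using i(4) unfolding pancake_vertices_def by auto
  have "hd q = p!(i-1)" using hd_prefix_rev[of i p] i lp by simp
  moreover have "hd p = p!0" using lp i by (cases p) auto
  moreover have "p!(i-1) \<noteq> p!0" using d i lp by (simp add: nth_eq_iff_index_eq)
  moreover have "p \<noteq> []" "q \<noteq> []" using lp i by (auto simp: prefix_rev_def)
  ultimately show "(if p = [] then 0 else hd p) \<noteq> (if q = [] then 0 else hd q)" by simp
qed

lemma chi_colorable: "pancake_colorable n (pancake_chi n)"
  unfolding pancake_chi_def by (rule LeastI[of "pancake_colorable n", OF colorable_exists])

theorem theorem2:
  fixes n m :: nat
  assumes "n \<ge> 1" and "m \<ge> 1"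
  shows "pancake_chi (n + m) \<le> pancake_chi n + pancake_chi m"
proof -
  define k1 where "k1 = pancake_chi n"
  define k2 where "k2 = pancake_chi m"
  obtain c1 where c1: "\<forall>p \<in> pancake_vertices n. c1 p < k1"
      "\<forall>p q. pancake_adj n p q \<longrightarrow> c1 p \<noteq> c1 q"
    using chi_colorable[of n] unfolding pancake_colorable_def k1_def by blast
  obtain c2 where c2: "\<forall>p \<in> pancake_vertices m. c2 p < k2"
      "\<forall>p q. pancake_adj m p q \<longrightarrow> c2 p \<noteq> c2 q"
    using chi_colorable[of m] unfolding pancake_colorable_def k2_def by blast
  define S where "S p = filter (\<lambda>x. x \<le> n) p" for p :: "nat list"
  define L where "L p = map (\<lambda>x. x - n) (filter (\<lambda>x. n < x) p)" for p :: "nat list"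
  define C where "C p = (if hd p \<le> n then c1 (S p) else k1 + c2 (L p))" for p
  have SV: "S p \<in> pancake_vertices n" if "p \<in> pancake_vertices (n+m)" for p
    using that unfolding pancake_vertices_def S_def by auto
  have LV: "L p \<in> pancake_vertices m" if "p \<in> pancake_vertices (n+m)" for p
  proof -
    have d: "distinct p" and s: "set p = {1..n+m}" using that unfolding pancake_vertices_def by auto
    have inj: "inj_on (\<lambda>x. x - n) (set (filter (\<lambda>x. n < x) p))"
      by (auto simp: inj_on_def)
    have "set (L p) = (\<lambda>x. x - n) ` {n+1..n+m}"
      unfolding L_def using s by (auto intro!: image_cong)
    also have "\<dots> = {1..m}"
    proof
      show "{1..m} \<subseteq> (\<lambda>x. x - n) ` {n+1..n+m}"
      proof
        fix y assume "y \<in> {1..m}"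
        then show "y \<in> (\<lambda>x. x - n) ` {n+1..n+m}" by (intro image_eqI[of _ _ "y+n"]) auto
      qed
    qed auto
    finally show ?thesis using d inj unfolding pancake_vertices_def L_def
      by (simp add: distinct_map)
  qed
  have "pancake_colorable (n+m) (k1+k2)"
    unfolding pancake_colorable_def
  proof (intro exI[of _ C] conjI ballI allI impI)
    fix p assume "p \<in> pancake_vertices (n+m)"
    moreover note SV[of p] LV[of p]
    ultimately have "c1 (S p) < k1" "c2 (L p) < k2" using c1(1) c2(1) by auto
    then show "C p < k1 + k2" unfolding C_def by auto
  next
    fix p q assume a: "pancake_adj (n+m) p q"
    then obtain i where i: "2 \<le> i" "i \<le> n+m" "q = prefix_rev i p"
        and pv: "p \<in> pancake_vertices (n+m)" and qv: "q \<in> pancake_vertices (n+m)"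
      unfolding pancake_adj_def by auto
    have lp: "length p = n+m" using vert_len pv .
    have hq: "hd q = p!(i-1)" using hd_prefix_rev[of i p] i lp by simp
    have hp: "hd p = p!0" using lp i by (cases p) auto
    show "C p \<noteq> C q"
    proof (cases "hd p \<le> n")
      case True
      show ?thesis
      proof (cases "hd q \<le> n")
        case True2: True
        define j where "j = length (filter (\<lambda>x. x \<le> n) (take i p))"
        have j2: "2 \<le> j" unfolding j_def using len2[of i p "\<lambda>x. x \<le> n"] i lp True True2 hp hq by simp
        have jn: "j \<le> n" unfolding j_def
          using len_filter_take_le[of "\<lambda>x. x \<le> n" i p] vert_len[OF SV[OF pv]] by (simp add: S_def)
        have "S q = prefix_rev j (S p)" unfolding S_def j_def i(3) by (rule filter_prefix_rev)
        hence "pancake_adj n (S p) (S q)" unfolding pancake_adj_def using SV[OF pv] SV[OF qv] j2 jn by blast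
        then show ?thesis using c1 True True2 unfolding C_def by auto
      next
        case False
        have "c1 (S p) < k1" using c1(1) SV[OF pv] by blast
        then show ?thesis using True False unfolding C_def by simp
      qed
    next
      case False
      show ?thesis
      proof (cases "hd q \<le> n")
        case True
        have "c1 (S q) < k1" using c1(1) SV[OF qv] by blast
        then show ?thesis using True False unfolding C_def by simp
      next
        case False2: False
        define j where "j = length (filter (\<lambda>x. n < x) (take i p))"
        have j2: "2 \<le> j" unfolding j_def using len2[of i p "\<lambda>x. n < x"] i lp False False2 hp hq by simp
        have jn: "j \<le> m" unfolding j_def
          using len_filter_take_le[of "\<lambda>x. n < x" i p] vert_len[OF LV[OF pv]] by (simp add: L_def)
        have "L q = prefix_rev j (L p)" unfolding L_def j_def i(3)
          by (simp add: filter_prefix_rev map_prefix_rev)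
        hence "pancake_adj m (L p) (L q)" unfolding pancake_adj_def using LV[OF pv] LV[OF qv] j2 jn by blast
        then show ?thesis using c2 False False2 unfolding C_def by auto
      qed
    qed
  qed
  then show ?thesis unfolding k1_def k2_def pancake_chi_def[of "n+m"] by (rule Least_le)
qed

end
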